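(* Let $q\in\mathbb{C}\setminus\{0,1,-1\}$, let $n\ge3$, and let $V$ be the complex vector space with basis $\{L_m: m\in\mathbb{Z}\}$. Define an $n$-linear bracket on $V$ by $$\llbracket L_{i_1},\dots,L_{i_n}\rrbracket=\frac{\mathrm{sign}(n)}{(q-q^{-1})^{n-1}}\det\Big(q^{2\left(r-\lfloor\frac{n-1}{2}\rfloor\right)i_j}\Big)_{0\le r\le n-1,\;1\le j\le n}\;L_{i_1+\cdots+i_n},$$ where $\mathrm{sign}(n)=1$ if $n\equiv0,1\pmod4$ and $-1$ if $n\equiv2,3\pmod4$. Then $(V,\llbracket\cdot,\dots,\cdot\rrbracket)$ is a sh-$n$-Lie algebra.
   Context: A sh-$n$-Lie algebra is a vector space $V$ with an $n$-linear bracket $[\cdot,\dots,\cdot]:V^{\otimes n}\to V$ that is skew-symmetric, $[x_{\sigma(1)},\dots,x_{\sigma(n)}]=\mathrm{sgn}(\sigma)[x_1,\dots,x_n]$, and satisfies the sh-Jacobi identity $$\sum_{\sigma\in Sh(n,n-1)}\mathrm{sgn}(\sigma)\big[[x_{\sigma(1)},\dots,x_{\sigma(n)}],x_{\sigma(n+1)},\dots,x_{\sigma(2n-1)}\big]=0$$ for all $x_1,\dots,x_{2n-1}\in V$, where $Sh(n,n-1)=\{\sigma\in S_{2n-1}:\sigma(1)<\dots<\sigma(n),\ \sigma(n+1)<\dots<\sigma(2n-1)\}$. This bracket is the $q$-deformed Virasoro–Witt $n$-algebra. *)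

theory Defs
  imports Complex_Main "HOL-Combinatorics.Permutations" "Jordan_Normal_Form.Determinant"
begin

text \<open>The vector space V with basis L_m (m in Z) is modelled as the finitely supported
  functions int => complex; L_m is the indicator of m.\<close>

definition Vspace :: "(int \<Rightarrow> complex) set" where
  "Vspace = {x. finite {m. x m \<noteq> 0}}"

definition basisL :: "int \<Rightarrow> (int \<Rightarrow> complex)" where
  "basisL k = (\<lambda>m. if m = k then 1 else 0)"

definition sh_n_Lie :: "(int \<Rightarrow> complex) set \<Rightarrow> nat \<Rightarrow> ((nat \<Rightarrow> (int \<Rightarrow> complex)) \<Rightarrow> (int \<Rightarrow> complex)) \<Rightarrow> bool" where
  "sh_n_Lie V n br \<longleftrightarrow>
     (\<forall>x. (\<forall>j<n. x j \<in> V) \<longrightarrow> br x \<in> V) \<and>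
     (\<forall>x j y z a b. (\<forall>k<n. x k \<in> V) \<and> j < n \<and> y \<in> V \<and> z \<in> V \<longrightarrow>
        br (x(j := (\<lambda>m. a * y m + b * z m))) =
        (\<lambda>m. a * br (x(j := y)) m + b * br (x(j := z)) m)) \<and>
     (\<forall>x p. (\<forall>k<n. x k \<in> V) \<and> p permutes {..<n} \<longrightarrow>
        br (x \<circ> p) = (\<lambda>m. of_int (sign p) * br x m)) \<and>
     (\<forall>x. (\<forall>k<2*n-1. x k \<in> V) \<longrightarrow>
        (\<lambda>m. \<Sum>\<sigma>\<in>{\<sigma>. \<sigma> permutes {..<2*n-1} \<and> strict_mono_on {..<n} \<sigma> \<and> strict_mono_on {n..<2*n-1} \<sigma>}.
           of_int (sign \<sigma>) * br (\<lambda>j. if j = 0 then br (\<lambda>k. x (\<sigma> k)) else x (\<sigma> (n - 1 + j))) m)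
        = (\<lambda>m. 0))"

definition signn :: "nat \<Rightarrow> complex" where
  "signn n = (if n mod 4 = 0 \<or> n mod 4 = 1 then 1 else -1)"

text \<open>Structure constant: the bracket of L_{i_0},...,L_{i_{n-1}} equals
  qcoeff q n i * L_{i_0 + ... + i_{n-1}}.\<close>
definition qcoeff :: "complex \<Rightarrow> nat \<Rightarrow> (nat \<Rightarrow> int) \<Rightarrow> complex" where
  "qcoeff q n i = signn n / (q - inverse q) ^ (n - 1) *
     det (mat n n (\<lambda>(r, j). q powi (2 * (int r - int ((n - 1) div 2)) * i j)))"

definition qbracket :: "complex \<Rightarrow> nat \<Rightarrow> (nat \<Rightarrow> (int \<Rightarrow> complex)) \<Rightarrow> (int \<Rightarrow> complex)" where
  "qbracket q n x = (\<lambda>m. \<Sum>i\<in>{i \<in> PiE {..<n} (\<lambda>j. {k. x j k \<noteq> 0}). (\<Sum>j<n. i j) = m}.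
       (\<Prod>j<n. x j (i j)) * qcoeff q n i)"

end

theory Submission
  imports Defs
begin

definition QQ :: "complex \<Rightarrow> int \<Rightarrow> int \<Rightarrow> complex" where
  "QQ q e v = q powi (2 * e * v)"
definition ex :: "nat \<Rightarrow> nat \<Rightarrow> int" where
  "ex n r = int r - int ((n - 1) div 2)"
definition Dl :: "complex \<Rightarrow> nat \<Rightarrow> (nat \<Rightarrow> int) \<Rightarrow> complex" where
  "Dl q n i = (\<Sum>p\<in>{p. p permutes {..<n}}. of_int (sign p) * (\<Prod>r<n. QQ q (ex n r) (i (p r))))"
definition Kc :: "complex \<Rightarrow> nat \<Rightarrow> complex" where
  "Kc q n = signn n / (q - inverse q) ^ (n - 1)"

lemma qcoeff_Dl: "qcoeff q n i = Kc q n * Dl q n i"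
proof -
  have "det (mat n n (\<lambda>(r, j). q powi (2 * (int r - int ((n - 1) div 2)) * i j))) = Dl q n i"
    unfolding Dl_def
  proof (subst det_def', rule mat_carrier, intro sum.cong)
    show "{p. p permutes {0..<n}} = {p. p permutes {..<n}}" by (simp add: atLeast0LessThan)
  next
    fix p assume "p \<in> {p. p permutes {..<n}}"
    then have p: "p permutes {..<n}" by simp
    have "(\<Prod>r = 0..<n. mat n n (\<lambda>(r, j). q powi (2 * (int r - int ((n - 1) div 2)) * i j)) $$ (r, p r))
        = (\<Prod>r<n. QQ q (ex n r) (i (p r)))"
    proof (rule prod.cong)
      fix x assume "x \<in> {..<n}"
      moreover have "p x < n" using p \<open>x \<in> {..<n}\<close> by (metis lessThan_iff permutes_in_image)
      ultimately show "mat n n (\<lambda>(r, j). q powi (2 * (int r - int ((n - 1) div 2)) * i j)) $$ (x, p x) = QQ q (ex n x) (i (p x))"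
        by (simp add: QQ_def ex_def)
    qed (simp add: atLeast0LessThan)
    then show "signof p * (\<Prod>r = 0..<n. mat n n (\<lambda>(r, j). q powi (2 * (int r - int ((n - 1) div 2)) * i j)) $$ (r, p r))
        = of_int (sign p) * (\<Prod>r<n. QQ q (ex n r) (i (p r)))" by simp
  qed
  then show ?thesis unfolding qcoeff_def Kc_def by simp
qed

lemma Dl_cong: "(\<And>j. j < n \<Longrightarrow> i j = i' j) \<Longrightarrow> Dl q n i = Dl q n i'"
  unfolding Dl_def
proof (intro sum.cong refl)
  fix p assume h: "\<And>j. j < n \<Longrightarrow> i j = i' j" and "p \<in> {p. p permutes {..<n}}"
  then have p: "p permutes {..<n}" by simp
  have "(\<Prod>r<n. QQ q (ex n r) (i (p r))) = (\<Prod>r<n. QQ q (ex n r) (i' (p r)))"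
  proof (rule prod.cong[OF refl])
    fix r assume "r \<in> {..<n}"
    then have "p r < n" using p by (metis lessThan_iff permutes_in_image)
    then show "QQ q (ex n r) (i (p r)) = QQ q (ex n r) (i' (p r))" using h by simp
  qed
  then show "of_int (sign p) * (\<Prod>r<n. QQ q (ex n r) (i (p r))) = of_int (sign p) * (\<Prod>r<n. QQ q (ex n r) (i' (p r)))" by simp
qed

lemma qcoeff_cong: "(\<And>j. j < n \<Longrightarrow> i j = i' j) \<Longrightarrow> qcoeff q n i = qcoeff q n i'"
  using Dl_cong qcoeff_Dl by metis

lemma Dl_perm:
  assumes p0: "p0 permutes {..<n}"
  shows "Dl q n (i \<circ> p0) = of_int (sign p0) * Dl q n i"
proof -
  have pp0: "permutation p0" using p0 permutation_permutes by blast
  have "Dl q n i = (\<Sum>p\<in>{p. p permutes {..<n}}. of_int (sign (p0 \<circ> p)) * (\<Prod>r<n. QQ q (ex n r) (i ((p0 \<circ> p) r))))"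
    unfolding Dl_def by (rule setum_permutations_compose_left[OF p0])
  also have "\<dots> = (\<Sum>p\<in>{p. p permutes {..<n}}. of_int (sign p0) * (of_int (sign p) * (\<Prod>r<n. QQ q (ex n r) ((i \<circ> p0) (p r)))))"
  proof (rule sum.cong[OF refl])
    fix p assume "p \<in> {p. p permutes {..<n}}"
    then have "permutation p" using permutation_permutes by blast
    then show "of_int (sign (p0 \<circ> p)) * (\<Prod>r<n. QQ q (ex n r) (i ((p0 \<circ> p) r))) =
       of_int (sign p0) * (of_int (sign p) * (\<Prod>r<n. QQ q (ex n r) ((i \<circ> p0) (p r))))"
      using pp0 by (simp add: sign_compose)
  qed
  also have "\<dots> = of_int (sign p0) * Dl q n (i \<circ> p0)"
    unfolding Dl_def by (simp add: sum_distrib_left)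
  finally have eq: "Dl q n i = of_int (sign p0) * Dl q n (i \<circ> p0)" .
  have s: "of_int (sign p0) * (of_int (sign p0)::complex) = 1"
    by (metis of_int_mult sign_idempotent of_int_1)
  have "of_int (sign p0) * Dl q n i = of_int (sign p0) * (of_int (sign p0) * Dl q n (i \<circ> p0))"
    by (subst eq) (rule refl)
  also have "\<dots> = (of_int (sign p0) * of_int (sign p0)) * Dl q n (i \<circ> p0)"
    by (rule mult.assoc[symmetric])
  also have "\<dots> = Dl q n (i \<circ> p0)" by (simp only: s mult_1_left)
  finally show ?thesis by simp
qed

lemma qcoeff_perm:
  assumes p0: "p0 permutes {..<n}"
  shows "qcoeff q n (i \<circ> p0) = of_int (sign p0) * qcoeff q n i"
  using Dl_perm[OF p0] by (simp add: qcoeff_Dl)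

lemma QQ_add_e: "q \<noteq> 0 \<Longrightarrow> QQ q e1 v * QQ q e2 v = QQ q (e1 + e2) v"
  unfolding QQ_def by (simp add: power_int_add[symmetric] algebra_simps)

lemma QQ_add_v: "q \<noteq> 0 \<Longrightarrow> QQ q e (v1 + v2) = QQ q e v1 * QQ q e v2"
  unfolding QQ_def by (simp add: power_int_add[symmetric] algebra_simps)

lemma QQ_sum: assumes q: "q \<noteq> 0" shows "finite A \<Longrightarrow> QQ q e (\<Sum>k\<in>A. f k) = (\<Prod>k\<in>A. QQ q e (f k))"
proof (induction A rule: finite_induct)
  case empty then show ?case by (simp add: QQ_def)
next
  case (insert x F) then show ?case by (simp add: QQ_add_v[OF q])
qed

lemma ab_exists:
  assumes "n \<ge> 3" "r0 < n"
  shows "\<exists>a<n. \<exists>b<n. b \<noteq> r0 \<and> ex n a + ex n r0 = ex n b"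
proof -
  define k where "k = (n - 1) div 2"
  have k1: "k \<ge> 1" "k + 2 \<le> n" using assms(1) unfolding k_def by linarith+
  have exk: "\<And>r. ex n r = int r - int k" by (simp add: ex_def k_def)
  show ?thesis
  proof (cases "r0 \<le> k")
    case True
    show ?thesis
      by (rule exI[of _ "n - 1"], rule conjI, use assms in simp,
          rule exI[of _ "n - 1 + r0 - k"]) (use True k1 assms in \<open>auto simp: exk\<close>)
  next
    case False
    show ?thesis
      by (rule exI[of _ 0], rule conjI, use assms in simp,
          rule exI[of _ "r0 - k"]) (use False k1 assms in \<open>auto simp: exk\<close>)
  qed
qed

definition yh :: "nat \<Rightarrow> (nat \<Rightarrow> int) \<Rightarrow> (nat \<Rightarrow> int)" where
  "yh n v = (\<lambda>j. if j = 0 then (\<Sum>k<n. v k) else v (n - 1 + j))"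

definition Gp :: "complex \<Rightarrow> nat \<Rightarrow> (nat \<Rightarrow> int) \<Rightarrow> complex" where
  "Gp q n u = (\<Prod>r<n. QQ q (ex n r) (u r))"

lemma core_c:
  assumes q: "q \<noteq> 0" and n: "n \<ge> 3" and p': "p' permutes {..<n}"
  shows "(\<Sum>\<rho>\<in>{\<rho>. \<rho> permutes {..<2*n-1}}. of_int (sign \<rho>) *
           (Gp q n (w \<circ> \<rho>) * (\<Prod>r<n. QQ q (ex n r) (yh n (w \<circ> \<rho>) (p' r))))) = 0"
proof -
  obtain r0 where r0: "r0 < n" "p' r0 = 0"
    using p' n by (metis lessThan_iff permutes_def permutes_not_in zero_less_iff_neq_zero
        not_less neq0_conv less_le_trans numeral_le_iff zero_less_numeral)
  obtain a b where ab: "a < n" "b < n" "b \<noteq> r0" "ex n a + ex n r0 = ex n b"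
    using ab_exists[OF n r0(1)] by blast
  have pb: "p' b < n" using ab(2) p' by (metis lessThan_iff permutes_in_image)
  have pb0: "p' b \<noteq> 0" using ab(3) r0(2) permutes_inj[OF p'] by (metis injD)
  define t2 where "t2 = n - 1 + p' b"
  have t2: "n \<le> t2" "t2 < 2*n-1" using pb pb0 unfolding t2_def by auto
  define \<tau> where "\<tau> = Transposition.transpose a t2"
  have at2: "a \<noteq> t2" using ab(1) t2 by auto
  have tau: "\<tau> permutes {..<2*n-1}" unfolding \<tau>_def
    by (rule permutes_swap_id) (use ab(1) t2 in auto)
  define R where "R = {..<n} - {r0}"
  define X where "X u = (\<Prod>k<n. QQ q (ex n k + ex n r0) (u k)) * (\<Prod>r\<in>R. QQ q (ex n r) (u (n - 1 + p' r)))" for u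
  have XG: "Gp q n u * (\<Prod>r<n. QQ q (ex n r) (yh n u (p' r))) = X u" for u
  proof -
    have "(\<Prod>r<n. QQ q (ex n r) (yh n u (p' r))) = QQ q (ex n r0) (yh n u (p' r0)) * (\<Prod>r\<in>R. QQ q (ex n r) (yh n u (p' r)))"
      unfolding R_def using r0(1) by (simp add: prod.remove)
    also have "(\<Prod>r\<in>R. QQ q (ex n r) (yh n u (p' r))) = (\<Prod>r\<in>R. QQ q (ex n r) (u (n - 1 + p' r)))"
    proof (rule prod.cong[OF refl])
      fix r assume "r \<in> R"
      then have "p' r \<noteq> 0" using r0 permutes_inj[OF p'] unfolding R_def by (metis DiffE injD singletonI)
      then show "QQ q (ex n r) (yh n u (p' r)) = QQ q (ex n r) (u (n - 1 + p' r))" by (simp add: yh_def)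
    qed
    also have "QQ q (ex n r0) (yh n u (p' r0)) = (\<Prod>k<n. QQ q (ex n r0) (u k))"
      using r0(2) by (simp add: yh_def QQ_sum[OF q])
    finally have "Gp q n u * (\<Prod>r<n. QQ q (ex n r) (yh n u (p' r))) =
        ((\<Prod>k<n. QQ q (ex n k) (u k)) * (\<Prod>k<n. QQ q (ex n r0) (u k))) * (\<Prod>r\<in>R. QQ q (ex n r) (u (n - 1 + p' r)))"
      unfolding Gp_def by (simp add: mult.assoc)
    also have "(\<Prod>k<n. QQ q (ex n k) (u k)) * (\<Prod>k<n. QQ q (ex n r0) (u k)) = (\<Prod>k<n. QQ q (ex n k + ex n r0) (u k))"
      by (simp add: prod.distrib[symmetric] QQ_add_e[OF q])
    finally show ?thesis unfolding X_def .
  qed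
  have Xinv: "X (u \<circ> \<tau>) = X u" for u
  proof -
    have A1: "\<tau> a = t2" "\<tau> t2 = a" unfolding \<tau>_def by auto
    have A2: "\<tau> k = k" if "k \<in> {..<n} - {a}" for k
      unfolding \<tau>_def using that t2 by (auto intro!: transpose_apply_other)
    have bR: "b \<in> R" unfolding R_def using ab by auto
    have A3: "\<tau> (n - 1 + p' r) = n - 1 + p' r" if "r \<in> R - {b}" for r
    proof -
      have "p' r \<noteq> p' b" using that permutes_inj[OF p'] by (metis DiffE injD singletonI)
      then have "n - 1 + p' r \<noteq> t2" unfolding t2_def by simp
      moreover have "n - 1 + p' r \<noteq> a"
      proof -
        have "p' r \<noteq> 0" using that r0 permutes_inj[OF p'] unfolding R_def by (metis DiffE injD singletonI)
        then show ?thesis using ab(1) by simp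
      qed
      ultimately show ?thesis unfolding \<tau>_def by (auto intro!: transpose_apply_other)
    qed
    have tb: "n - 1 + p' b = t2" unfolding t2_def by simp
    have P1: "(\<Prod>k<n. QQ q (ex n k + ex n r0) (f k)) = QQ q (ex n a + ex n r0) (f a) * (\<Prod>k\<in>{..<n} - {a}. QQ q (ex n k + ex n r0) (f k))" for f
      using ab(1) by (simp add: prod.remove)
    have P2: "(\<Prod>r\<in>R. QQ q (ex n r) (f (n - 1 + p' r))) = QQ q (ex n b) (f t2) * (\<Prod>r\<in>R - {b}. QQ q (ex n r) (f (n - 1 + p' r)))" for f
      unfolding t2_def using bR by (simp add: prod.remove R_def)
    have E1: "(\<Prod>k\<in>{..<n} - {a}. QQ q (ex n k + ex n r0) ((u \<circ> \<tau>) k)) = (\<Prod>k\<in>{..<n} - {a}. QQ q (ex n k + ex n r0) (u k))"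
      by (rule prod.cong) (auto simp: A2)
    have E2: "(\<Prod>r\<in>R - {b}. QQ q (ex n r) ((u \<circ> \<tau>) (n - 1 + p' r))) = (\<Prod>r\<in>R - {b}. QQ q (ex n r) (u (n - 1 + p' r)))"
    proof (rule prod.cong[OF refl])
      fix r assume "r \<in> R - {b}"
      from A3[OF this] show "QQ q (ex n r) ((u \<circ> \<tau>) (n - 1 + p' r)) = QQ q (ex n r) (u (n - 1 + p' r))"
        by simp
    qed
    show ?thesis
      unfolding X_def P1[of "u \<circ> \<tau>"] P1[of u] P2[of "u \<circ> \<tau>"] P2[of u] E1 E2
      by (simp add: A1 ab(4))
  qed
  define f where "f \<rho> = of_int (sign \<rho>) * X (w \<circ> \<rho>)" for \<rho>
  have "(\<Sum>\<rho>\<in>{\<rho>. \<rho> permutes {..<2*n-1}}. f \<rho>) = (\<Sum>\<rho>\<in>{\<rho>. \<rho> permutes {..<2*n-1}}. f (\<rho> \<circ> \<tau>))"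
    by (rule sum_permutations_compose_right[OF tau])
  also have "\<dots> = (\<Sum>\<rho>\<in>{\<rho>. \<rho> permutes {..<2*n-1}}. - f \<rho>)"
  proof (rule sum.cong[OF refl])
    fix \<rho> assume "\<rho> \<in> {\<rho>. \<rho> permutes {..<2*n-1}}"
    then have "permutation \<rho>" using permutation_permutes by blast
    moreover have "permutation \<tau>" using tau permutation_permutes by blast
    ultimately have "sign (\<rho> \<circ> \<tau>) = - sign \<rho>"
      by (simp add: sign_compose \<tau>_def sign_swap_id at2)
    then show "f (\<rho> \<circ> \<tau>) = - f \<rho>"
      unfolding f_def using Xinv[of "w \<circ> \<rho>"] by (simp add: o_assoc)
  qed
  finally have "(\<Sum>\<rho>\<in>{\<rho>. \<rho> permutes {..<2*n-1}}. f \<rho>) = 0"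
    by (simp add: sum_negf)
  then show ?thesis unfolding f_def XG[symmetric] .
qed

lemma yh_perm:
  assumes p: "p permutes {..<n}"
  shows "qcoeff q n (yh n (v \<circ> p)) = qcoeff q n (yh n v)"
proof (rule qcoeff_cong)
  fix j assume "j < n"
  show "yh n (v \<circ> p) j = yh n v j"
  proof (cases "j = 0")
    case True
    then show ?thesis unfolding yh_def using sum.permute[OF p, of v] by simp
  next
    case False
    then have "p (n - 1 + j) = n - 1 + j" using p permutes_not_in by fastforce
    then show ?thesis unfolding yh_def using False by simp
  qed
qed

lemma core_b:
  assumes q: "q \<noteq> 0" and n: "n \<ge> 3"
  shows "(\<Sum>\<rho>\<in>{\<rho>. \<rho> permutes {..<2*n-1}}. of_int (sign \<rho>) *
           (Gp q n (w \<circ> \<rho>) * qcoeff q n (yh n (w \<circ> \<rho>)))) = 0"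
proof -
  let ?P = "{\<rho>. \<rho> permutes {..<2*n-1}}"
  let ?Q = "{p. p permutes {..<n}}"
  let ?T = "\<lambda>\<rho> p'. of_int (sign \<rho>) * (Gp q n (w \<circ> \<rho>) * (\<Prod>r<n. QQ q (ex n r) (yh n (w \<circ> \<rho>) (p' r))))"
  have "(\<Sum>\<rho>\<in>?P. of_int (sign \<rho>) * (Gp q n (w \<circ> \<rho>) * qcoeff q n (yh n (w \<circ> \<rho>))))
      = (\<Sum>\<rho>\<in>?P. \<Sum>p'\<in>?Q. Kc q n * (of_int (sign p') * ?T \<rho> p'))"
    by (rule sum.cong[OF refl]) (simp add: qcoeff_Dl Dl_def sum_distrib_left mult_ac)
  also have "\<dots> = (\<Sum>p'\<in>?Q. \<Sum>\<rho>\<in>?P. Kc q n * (of_int (sign p') * ?T \<rho> p'))"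
    by (rule sum.swap)
  also have "\<dots> = (\<Sum>p'\<in>?Q. Kc q n * (of_int (sign p') * (\<Sum>\<rho>\<in>?P. ?T \<rho> p')))"
    by (simp add: sum_distrib_left)
  also have "\<dots> = 0"
    by (rule sum.neutral) (use core_c[OF q n] in simp)
  finally show ?thesis .
qed

lemma core_full:
  assumes q: "q \<noteq> 0" and n: "n \<ge> 3"
  shows "(\<Sum>\<rho>\<in>{\<rho>. \<rho> permutes {..<2*n-1}}. of_int (sign \<rho>) *
           (qcoeff q n (w \<circ> \<rho>) * qcoeff q n (yh n (w \<circ> \<rho>)))) = 0"
proof -
  let ?P = "{\<rho>. \<rho> permutes {..<2*n-1}}"
  let ?Q = "{p. p permutes {..<n}}"
  define H where "H \<rho> = of_int (sign \<rho>) * (Gp q n (w \<circ> \<rho>) * qcoeff q n (yh n (w \<circ> \<rho>)))" for \<rho>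
  have key: "of_int (sign \<rho>) * (of_int (sign p) * Gp q n (w \<circ> \<rho> \<circ> p) * qcoeff q n (yh n (w \<circ> \<rho>))) = H (\<rho> \<circ> p)"
    if r: "\<rho> \<in> ?P" and p: "p \<in> ?Q" for \<rho> p
  proof -
    have pp: "p permutes {..<n}" using p by simp
    have "permutation \<rho>" "permutation p" using r p permutation_permutes by blast+
    then have "sign (\<rho> \<circ> p) = sign \<rho> * sign p" by (simp add: sign_compose)
    moreover have "qcoeff q n (yh n (w \<circ> (\<rho> \<circ> p))) = qcoeff q n (yh n (w \<circ> \<rho>))"
      using yh_perm[OF pp, where v="w \<circ> \<rho>" and q=q] by (simp add: o_assoc)
    ultimately show ?thesis unfolding H_def by (simp add: o_assoc)
  qed
  have "(\<Sum>\<rho>\<in>?P. of_int (sign \<rho>) * (qcoeff q n (w \<circ> \<rho>) * qcoeff q n (yh n (w \<circ> \<rho>))))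
     = (\<Sum>\<rho>\<in>?P. Kc q n * (\<Sum>p\<in>?Q. H (\<rho> \<circ> p)))"
  proof (rule sum.cong[OF refl])
    fix \<rho> assume r: "\<rho> \<in> ?P"
    have "qcoeff q n (w \<circ> \<rho>) = Kc q n * (\<Sum>p\<in>?Q. of_int (sign p) * Gp q n (w \<circ> \<rho> \<circ> p))"
      by (simp add: qcoeff_Dl Dl_def Gp_def)
    then have "of_int (sign \<rho>) * (qcoeff q n (w \<circ> \<rho>) * qcoeff q n (yh n (w \<circ> \<rho>)))
      = Kc q n * (\<Sum>p\<in>?Q. of_int (sign \<rho>) * (of_int (sign p) * Gp q n (w \<circ> \<rho> \<circ> p) * qcoeff q n (yh n (w \<circ> \<rho>))))"
      by (simp add: sum_distrib_left sum_distrib_right mult_ac)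
    also have "\<dots> = Kc q n * (\<Sum>p\<in>?Q. H (\<rho> \<circ> p))"
      using key[OF r] by simp
    finally show "of_int (sign \<rho>) * (qcoeff q n (w \<circ> \<rho>) * qcoeff q n (yh n (w \<circ> \<rho>))) = Kc q n * (\<Sum>p\<in>?Q. H (\<rho> \<circ> p))" .
  qed
  also have "\<dots> = Kc q n * (\<Sum>p\<in>?Q. \<Sum>\<rho>\<in>?P. H (\<rho> \<circ> p))"
    by (simp add: sum_distrib_left[symmetric] sum.swap[of _ ?Q])
  also have "\<dots> = Kc q n * (\<Sum>p\<in>?Q. \<Sum>\<rho>\<in>?P. H \<rho>)"
  proof -
    have "(\<Sum>\<rho>\<in>?P. H (\<rho> \<circ> p)) = (\<Sum>\<rho>\<in>?P. H \<rho>)" if "p \<in> ?Q" for p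
    proof -
      have "p permutes {..<2*n-1}" using that by (auto intro: permutes_subset)
      then show ?thesis using sum_permutations_compose_right[of p _ H] by simp
    qed
    then show ?thesis by simp
  qed
  also have "\<dots> = 0" using core_b[OF q n, of w] unfolding H_def by simp
  finally show ?thesis .
qed

lemma smono_unique:
  fixes f g :: "nat \<Rightarrow> nat"
  assumes f: "strict_mono_on A f" and g: "strict_mono_on A g" and im: "f ` A = g ` A"
  shows "x \<in> A \<Longrightarrow> f x = g x"
proof (induction x rule: less_induct)
  case (less x)
  have le1: "g x \<le> f x"
  proof -
    obtain y where y: "y \<in> A" "f x = g y" using im less.prems by (metis imageE imageI)
    have "\<not> y < x"
    proof
      assume "y < x"
      then have "g y = f y" using less.IH y(1) by simp
      then have "f y < f x" using strict_mono_onD[OF f y(1) less.prems \<open>y < x\<close>] by simp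
      then show False using y \<open>g y = f y\<close> by simp
    qed
    then have "x = y \<or> x < y" by auto
    then show ?thesis using y strict_mono_onD[OF g less.prems y(1)] by auto
  qed
  have le2: "f x \<le> g x"
  proof -
    obtain y where y: "y \<in> A" "g x = f y" using im less.prems by (metis imageE imageI)
    have "\<not> y < x"
    proof
      assume "y < x"
      then have "g y = f y" using less.IH y(1) by simp
      then have "g y < g x" using strict_mono_onD[OF g y(1) less.prems \<open>y < x\<close>] by simp
      then show False using y \<open>g y = f y\<close> by simp
    qed
    then have "x = y \<or> x < y" by auto
    then show ?thesis using y strict_mono_onD[OF f less.prems y(1)] by auto
  qed
  show ?case using le1 le2 by simp
qed

lemma block_enum:
  fixes A :: "nat set"
  assumes "finite A" "card A = m"
  shows "\<exists>f. strict_mono_on {c..<c+m} f \<and> f ` {c..<c+m} = A"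
proof -
  define L where "L = sorted_list_of_set A"
  have len: "length L = m" unfolding L_def using assms by simp
  have srt: "sorted_wrt (<) L" unfolding L_def by (rule strict_sorted_list_of_set)
  have setL: "set L = A" unfolding L_def using assms by simp
  define f where "f x = L ! (x - c)" for x
  have "strict_mono_on {c..<c+m} f"
  proof (rule strict_mono_onI)
    fix x y assume "x \<in> {c..<c+m}" "y \<in> {c..<c+m}" "x < y"
    then show "f x < f y" unfolding f_def using sorted_wrt_nth_less[OF srt, of "x - c" "y - c"] len by auto
  qed
  moreover have "f ` {c..<c+m} = A"
  proof
    show "f ` {c..<c+m} \<subseteq> A" unfolding f_def using len setL by auto
    show "A \<subseteq> f ` {c..<c+m}"
    proof
      fix y assume "y \<in> A"
      then obtain i where i: "i < m" "L ! i = y" using setL len by (metis in_set_conv_nth)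
      then have "f (i + c) = y" unfolding f_def by simp
      moreover have "i + c \<in> {c..<c+m}" using i by simp
      ultimately show "y \<in> f ` {c..<c+m}" by (metis imageI)
    qed
  qed
  ultimately show ?thesis by blast
qed

definition Sh :: "nat \<Rightarrow> nat \<Rightarrow> (nat \<Rightarrow> nat) set" where
  "Sh n N = {\<sigma>. \<sigma> permutes {..<N} \<and> strict_mono_on {..<n} \<sigma> \<and> strict_mono_on {n..<N} \<sigma>}"

lemma decomp_images:
  fixes \<sigma> p p2 :: "nat \<Rightarrow> nat" and n N :: nat
  assumes s: "\<sigma> permutes {..<N}" and p: "p permutes {..<n}" and p2: "p2 permutes {n..<N}"
  shows "(\<sigma> \<circ> p \<circ> p2) ` {..<n} = \<sigma> ` {..<n}" "(\<sigma> \<circ> p \<circ> p2) ` {n..<N} = \<sigma> ` {n..<N}"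
proof -
  have "p2 x = x" if "x < n" for x
  proof -
    have "x \<notin> {n..<N}" using that by simp
    then show ?thesis by (rule permutes_not_in[OF p2])
  qed
  then have "(\<sigma> \<circ> p \<circ> p2) ` {..<n} = (\<sigma> \<circ> p) ` {..<n}"
    by (intro image_cong) auto
  then have "(\<sigma> \<circ> p \<circ> p2) ` {..<n} = \<sigma> ` (p ` {..<n})"
    by (simp add: image_comp)
  then show "(\<sigma> \<circ> p \<circ> p2) ` {..<n} = \<sigma> ` {..<n}" using permutes_image[OF p] by simp
  have "p (p2 x) = p2 x" if "x \<in> {n..<N}" for x
  proof -
    have "p2 x \<in> {n..<N}" using that permutes_in_image[OF p2] by simp
    then have "p2 x \<notin> {..<n}" by simp
    then show ?thesis by (rule permutes_not_in[OF p])
  qed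
  then have "(\<sigma> \<circ> p \<circ> p2) ` {n..<N} = \<sigma> ` (p2 ` {n..<N})"
    by (auto simp: image_iff)
  then show "(\<sigma> \<circ> p \<circ> p2) ` {n..<N} = \<sigma> ` {n..<N}" using permutes_image[OF p2] by simp
qed

lemma shuffle_sum:
  fixes g :: "(nat \<Rightarrow> nat) \<Rightarrow> 'a::comm_monoid_add"
  assumes nN: "n \<le> N"
  shows "(\<Sum>\<rho>\<in>{\<rho>. \<rho> permutes {..<N}}. g \<rho>) =
    (\<Sum>\<sigma>\<in>Sh n N. \<Sum>p\<in>{p. p permutes {..<n}}. \<Sum>p2\<in>{p. p permutes {n..<N}}. g (\<sigma> \<circ> p \<circ> p2))"
proof -
  let ?Q = "{p. p permutes {..<n}}" and ?Q2 = "{p. p permutes {n..<N}}"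
  define \<Phi> where "\<Phi> z = (case z of (\<sigma>, p, p2) \<Rightarrow> \<sigma> \<circ> p \<circ> p2)" for z :: "(nat \<Rightarrow> nat) \<times> (nat \<Rightarrow> nat) \<times> (nat \<Rightarrow> nat)"
  have inj: "inj_on \<Phi> (Sh n N \<times> ?Q \<times> ?Q2)"
  proof (rule inj_onI)
    fix z z' assume zA: "z \<in> Sh n N \<times> ?Q \<times> ?Q2" "z' \<in> Sh n N \<times> ?Q \<times> ?Q2" and Ez: "\<Phi> z = \<Phi> z'"
    obtain \<sigma> p p2 where z: "z = (\<sigma>, p, p2)" by (cases z) auto
    obtain \<sigma>' p' p2' where z': "z' = (\<sigma>', p', p2')" by (cases z') auto
    have A: "\<sigma> \<in> Sh n N" "p \<in> ?Q" "p2 \<in> ?Q2" "\<sigma>' \<in> Sh n N" "p' \<in> ?Q" "p2' \<in> ?Q2"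
      using zA z z' by auto
    have E: "\<Phi> (\<sigma>, p, p2) = \<Phi> (\<sigma>', p', p2')" using Ez z z' by simp
    have s: "\<sigma> permutes {..<N}" "strict_mono_on {..<n} \<sigma>" "strict_mono_on {n..<N} \<sigma>"
      using A(1) unfolding Sh_def by auto
    have s': "\<sigma>' permutes {..<N}" "strict_mono_on {..<n} \<sigma>'" "strict_mono_on {n..<N} \<sigma>'"
      using A(4) unfolding Sh_def by auto
    have pp: "p permutes {..<n}" "p2 permutes {n..<N}" "p' permutes {..<n}" "p2' permutes {n..<N}"
      using A by auto
    have E': "\<sigma> \<circ> p \<circ> p2 = \<sigma>' \<circ> p' \<circ> p2'" using E unfolding \<Phi>_def by simp
    have i1: "\<sigma> ` {..<n} = \<sigma>' ` {..<n}"
      using decomp_images(1)[OF s(1) pp(1,2)] decomp_images(1)[OF s'(1) pp(3,4)] E' by simp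
    have i2: "\<sigma> ` {n..<N} = \<sigma>' ` {n..<N}"
      using decomp_images(2)[OF s(1) pp(1,2)] decomp_images(2)[OF s'(1) pp(3,4)] E' by simp
    have ss: "\<sigma> = \<sigma>'"
    proof
      fix x
      consider "x < n" | "n \<le> x \<and> x < N" | "N \<le> x" by linarith
      then show "\<sigma> x = \<sigma>' x"
      proof cases
        case 1 then show ?thesis using smono_unique[OF s(2) s'(2) i1] by simp
      next
        case 2 then show ?thesis using smono_unique[OF s(3) s'(3) i2] by simp
      next
        case 3 then show ?thesis using permutes_not_in[OF s(1)] permutes_not_in[OF s'(1)] by simp
      qed
    qed
    have pp2: "p (p2 x) = p' (p2' x)" for x
    proof -
      have "\<sigma> (p (p2 x)) = \<sigma> (p' (p2' x))" using ss fun_cong[OF E', of x] by simp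
      then show ?thesis using permutes_inj[OF s(1)] by (metis injD)
    qed
    have "p = p'"
    proof
      fix x show "p x = p' x"
      proof (cases "x < n")
        case True
        then have "p2 x = x" "p2' x = x" using permutes_not_in[OF pp(2)] permutes_not_in[OF pp(4)] by auto
        then show ?thesis using pp2[of x] by simp
      next
        case False then show ?thesis using permutes_not_in[OF pp(1)] permutes_not_in[OF pp(3)] by simp
      qed
    qed
    moreover have "p2 = p2'"
    proof
      fix x show "p2 x = p2' x"
      proof (cases "x \<in> {n..<N}")
        case True
        then have "p2 x \<in> {n..<N}" "p2' x \<in> {n..<N}" using permutes_in_image[OF pp(2)] permutes_in_image[OF pp(4)] by auto
        then have "p (p2 x) = p2 x" "p' (p2' x) = p2' x" using permutes_not_in[OF pp(1)] permutes_not_in[OF pp(3)] by auto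
        then show ?thesis using pp2[of x] by simp
      next
        case False then show ?thesis using permutes_not_in[OF pp(2)] permutes_not_in[OF pp(4)] by simp
      qed
    qed
    ultimately show "z = z'" using ss z z' by simp
  qed
  have im: "\<Phi> ` (Sh n N \<times> ?Q \<times> ?Q2) = {\<rho>. \<rho> permutes {..<N}}"
  proof
    show "\<Phi> ` (Sh n N \<times> ?Q \<times> ?Q2) \<subseteq> {\<rho>. \<rho> permutes {..<N}}"
    proof
      fix \<rho> assume "\<rho> \<in> \<Phi> ` (Sh n N \<times> ?Q \<times> ?Q2)"
      then obtain \<sigma> p p2 where A: "\<sigma> \<in> Sh n N" "p \<in> ?Q" "p2 \<in> ?Q2" "\<rho> = \<Phi> (\<sigma>, p, p2)" by auto
      then have "\<sigma> permutes {..<N}" "p permutes {..<N}" "p2 permutes {..<N}"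
        unfolding Sh_def using nN by (auto intro: permutes_subset)
      then show "\<rho> \<in> {\<rho>. \<rho> permutes {..<N}}" unfolding A(4) \<Phi>_def by (simp add: permutes_compose)
    qed
    show "{\<rho>. \<rho> permutes {..<N}} \<subseteq> \<Phi> ` (Sh n N \<times> ?Q \<times> ?Q2)"
    proof
      fix \<rho> assume "\<rho> \<in> {\<rho>. \<rho> permutes {..<N}}"
      then have r: "\<rho> permutes {..<N}" by simp
      have injr: "inj \<rho>" using permutes_inj[OF r] .
      have c1: "card (\<rho> ` {..<n}) = n" using injr by (simp add: card_image inj_on_subset)
      have c2: "card (\<rho> ` {n..<N}) = N - n" using injr by (simp add: card_image inj_on_subset)
      obtain f1 where f1: "strict_mono_on {0..<0+n} f1" "f1 ` {0..<0+n} = \<rho> ` {..<n}"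
        using block_enum[OF _ c1, of 0] by blast
      obtain f2 where f2: "strict_mono_on {n..<n+(N-n)} f2" "f2 ` {n..<n+(N-n)} = \<rho> ` {n..<N}"
        using block_enum[OF _ c2, of n] by blast
      have f1': "strict_mono_on {..<n} f1" "f1 ` {..<n} = \<rho> ` {..<n}" using f1 by (auto simp: atLeast0LessThan)
      have f2': "strict_mono_on {n..<N} f2" "f2 ` {n..<N} = \<rho> ` {n..<N}" using f2 nN by auto
      define \<sigma> where "\<sigma> x = (if x < n then f1 x else if x < N then f2 x else x)" for x
      have sm1: "strict_mono_on {..<n} \<sigma>"
        using f1'(1) unfolding \<sigma>_def strict_mono_on_def monotone_on_def by auto
      have sm2: "strict_mono_on {n..<N} \<sigma>"
        using f2'(1) unfolding \<sigma>_def strict_mono_on_def monotone_on_def by auto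
      have si1: "\<sigma> ` {..<n} = \<rho> ` {..<n}" using f1'(2) unfolding \<sigma>_def by (auto simp: image_iff)
      have si2: "\<sigma> ` {n..<N} = \<rho> ` {n..<N}" using f2'(2) unfolding \<sigma>_def by (auto simp: image_iff)
      have U: "{..<N} = {..<n} \<union> {n..<N}" using nN by auto
      have sim: "\<sigma> ` {..<N} = {..<N}"
        using si1 si2 permutes_image[OF r] U by (metis image_Un)
      have "inj_on \<sigma> {..<N}" by (rule eq_card_imp_inj_on) (simp_all add: sim)
      then have "bij_betw \<sigma> {..<N} {..<N}" using sim by (simp add: bij_betw_def)
      then have sp: "\<sigma> permutes {..<N}" by (rule bij_imp_permutes) (use nN in \<open>simp add: \<sigma>_def\<close>)
      then have sSh: "\<sigma> \<in> Sh n N" unfolding Sh_def using sm1 sm2 by simp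
      have isig: "Hilbert_Choice.inv \<sigma> (\<rho> x) \<in> {..<n}" if "x < n" for x
      proof -
        have "\<rho> x \<in> \<sigma> ` {..<n}" using si1 that by auto
        then obtain z where "z < n" "\<rho> x = \<sigma> z" by auto
        then show ?thesis using permutes_inverses(2)[OF sp] by simp
      qed
      have isig2: "Hilbert_Choice.inv \<sigma> (\<rho> x) \<in> {n..<N}" if "x \<in> {n..<N}" for x
      proof -
        have "\<rho> x \<in> \<sigma> ` {n..<N}" using si2 that by auto
        then obtain z where "z \<in> {n..<N}" "\<rho> x = \<sigma> z" by auto
        then show ?thesis using permutes_inverses(2)[OF sp] by simp
      qed
      have injis: "inj (Hilbert_Choice.inv \<sigma>)" using permutes_inj[OF permutes_inv[OF sp]] .
      define p where "p x = (if x < n then Hilbert_Choice.inv \<sigma> (\<rho> x) else x)" for x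
      define p2 where "p2 x = (if x \<in> {n..<N} then Hilbert_Choice.inv \<sigma> (\<rho> x) else x)" for x
      have pP: "p permutes {..<n}"
      proof (rule bij_imp_permutes)
        have ij: "inj_on p {..<n}"
        proof (rule inj_onI)
          fix x y assume "x \<in> {..<n}" "y \<in> {..<n}" "p x = p y"
          then have "Hilbert_Choice.inv \<sigma> (\<rho> x) = Hilbert_Choice.inv \<sigma> (\<rho> y)" unfolding p_def by simp
          then have "\<rho> x = \<rho> y" using injD[OF injis] by blast
          then show "x = y" using injD[OF injr] by blast
        qed
        have "p ` {..<n} \<subseteq> {..<n}" unfolding p_def using isig by auto
        then have "p ` {..<n} = {..<n}" using endo_inj_surj[OF _ _ ij] by simp
        then show "bij_betw p {..<n} {..<n}" using ij by (simp add: bij_betw_def)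
      qed (simp add: p_def)
      have p2P: "p2 permutes {n..<N}"
      proof (rule bij_imp_permutes)
        have ij: "inj_on p2 {n..<N}"
        proof (rule inj_onI)
          fix x y assume "x \<in> {n..<N}" "y \<in> {n..<N}" "p2 x = p2 y"
          then have "Hilbert_Choice.inv \<sigma> (\<rho> x) = Hilbert_Choice.inv \<sigma> (\<rho> y)" unfolding p2_def by simp
          then have "\<rho> x = \<rho> y" using injD[OF injis] by blast
          then show "x = y" using injD[OF injr] by blast
        qed
        have "p2 ` {n..<N} \<subseteq> {n..<N}" unfolding p2_def using isig2 by auto
        then have "p2 ` {n..<N} = {n..<N}" using endo_inj_surj[OF _ _ ij] by simp
        then show "bij_betw p2 {n..<N} {n..<N}" using ij by (simp add: bij_betw_def)
      qed (auto simp: p2_def)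
      have "\<rho> = \<sigma> \<circ> p \<circ> p2"
      proof
        fix x
        consider "x < n" | "x \<in> {n..<N}" | "N \<le> x" by force
        then show "\<rho> x = (\<sigma> \<circ> p \<circ> p2) x"
        proof cases
          case 1 then show ?thesis unfolding p_def p2_def using permutes_inverses(1)[OF sp] by simp
        next
          case 2
          then have "p2 x = Hilbert_Choice.inv \<sigma> (\<rho> x)" unfolding p2_def by simp
          moreover have "\<not> Hilbert_Choice.inv \<sigma> (\<rho> x) < n" using isig2[OF 2] by simp
          ultimately show ?thesis unfolding p_def using permutes_inverses(1)[OF sp] by simp
        next
          case 3
          then have "\<rho> x = x" using permutes_not_in[OF r] by simp
          moreover have "p2 x = x" "p x = x" "\<sigma> x = x" using 3 nN unfolding p_def p2_def \<sigma>_def by auto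
          ultimately show ?thesis by simp
        qed
      qed
      then have "\<rho> = \<Phi> (\<sigma>, p, p2)" unfolding \<Phi>_def by simp
      moreover have "(\<sigma>, p, p2) \<in> Sh n N \<times> ?Q \<times> ?Q2" using sSh pP p2P by simp
      ultimately show "\<rho> \<in> \<Phi> ` (Sh n N \<times> ?Q \<times> ?Q2)" by blast
    qed
  qed
  have "(\<Sum>\<sigma>\<in>Sh n N. \<Sum>p\<in>?Q. \<Sum>p2\<in>?Q2. g (\<sigma> \<circ> p \<circ> p2)) = (\<Sum>\<sigma>\<in>Sh n N. \<Sum>z\<in>?Q \<times> ?Q2. g (\<Phi> (\<sigma>, z)))"
    by (rule sum.cong[OF refl]) (simp add: sum.cartesian_product \<Phi>_def case_prod_unfold)
  also have "\<dots> = (\<Sum>z\<in>Sh n N \<times> (?Q \<times> ?Q2). g (\<Phi> z))"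
    by (simp add: sum.cartesian_product case_prod_unfold)
  also have "\<dots> = (\<Sum>\<rho>\<in>\<Phi> ` (Sh n N \<times> ?Q \<times> ?Q2). g \<rho>)"
    by (rule sum.reindex[OF inj, symmetric, unfolded comp_def])
  finally show ?thesis using im by simp
qed

definition hsh :: "nat \<Rightarrow> nat \<Rightarrow> nat" where
  "hsh n j = (if 1 \<le> j \<and> j < n then j + n - 1 else if n \<le> j \<and> j < 2*n-1 then j - (n - 1) else j)"

lemma hsh_invol: "n \<ge> 1 \<Longrightarrow> hsh n (hsh n j) = j"
  unfolding hsh_def by auto

lemma hsh_permutes: assumes "n \<ge> 1" shows "hsh n permutes {..<2*n-1}"
proof (rule bij_imp_permutes)
  have "inj_on (hsh n) {..<2*n-1}" using hsh_invol[OF assms] by (metis inj_on_inverseI)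
  moreover have "hsh n ` {..<2*n-1} \<subseteq> {..<2*n-1}" unfolding hsh_def by auto
  ultimately show "bij_betw (hsh n) {..<2*n-1} {..<2*n-1}"
    using endo_inj_surj[of "{..<2*n-1}" "hsh n"] by (simp add: bij_betw_def)
qed (auto simp: hsh_def)

lemma FF_perm:
  assumes n: "n \<ge> 1" and p: "p permutes {..<n}" and p2: "p2 permutes {n..<2*n-1}"
  shows "qcoeff q n (v \<circ> p \<circ> p2) * qcoeff q n (yh n (v \<circ> p \<circ> p2)) =
    of_int (sign p) * of_int (sign p2) * (qcoeff q n v * qcoeff q n (yh n v))"
proof -
  define u where "u = v \<circ> p"
  define p2' where "p2' = hsh n \<circ> p2 \<circ> hsh n"
  have hp: "hsh n permutes {..<2*n-1}" using hsh_permutes[OF n] .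
  have p2N: "p2 permutes {..<2*n-1}" using p2 by (auto intro: permutes_subset)
  have p2'N: "p2' permutes {..<2*n-1}" unfolding p2'_def using hp p2N by (simp add: permutes_compose)
  have fix2: "p2 x = x" if "x \<notin> {n..<2*n-1}" for x using permutes_not_in[OF p2 that] .
  have p2'n: "p2' permutes {..<n}"
  proof (rule permutes_superset[OF p2'N])
    fix x assume x: "x \<in> {..<2*n-1} - {..<n}"
    then have "hsh n x = x - (n - 1)" unfolding hsh_def by auto
    moreover have "x - (n - 1) \<notin> {n..<2*n-1}" using x by auto
    ultimately have "p2 (hsh n x) = hsh n x" using fix2 by simp
    then show "p2' x = x" unfolding p2'_def using hsh_invol[OF n] by simp
  qed
  have "permutation (hsh n)" "permutation p2" using hp p2N permutation_permutes by blast+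
  then have "sign (hsh n \<circ> p2 \<circ> hsh n) = sign (hsh n) * sign p2 * sign (hsh n)"
    by (simp add: sign_compose permutation_compose)
  then have sg: "sign p2' = sign p2" unfolding p2'_def
    by (auto simp: sign_def)
  have c1: "qcoeff q n (u \<circ> p2) = qcoeff q n u"
    by (rule qcoeff_cong) (simp add: fix2)
  have c2: "qcoeff q n (yh n (u \<circ> p2)) = qcoeff q n (yh n u \<circ> p2')"
  proof (rule qcoeff_cong)
    fix j assume j: "j < n"
    show "yh n (u \<circ> p2) j = (yh n u \<circ> p2') j"
    proof (cases "j = 0")
      case True
      have "hsh n 0 = 0" unfolding hsh_def by simp
      moreover have "p2 0 = 0" using fix2 n by simp
      ultimately have "p2' 0 = 0" unfolding p2'_def by simp
      moreover have "(\<Sum>k<n. u (p2 k)) = (\<Sum>k<n. u k)" by (rule sum.cong) (auto simp: fix2)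
      ultimately show ?thesis using True unfolding yh_def by simp
    next
      case False
      define y where "y = p2 (n - 1 + j)"
      have h1: "hsh n j = n - 1 + j" unfolding hsh_def using False j by auto
      have "n - 1 + j \<in> {n..<2*n-1}" using False j by auto
      then have inr: "y \<in> {n..<2*n-1}" unfolding y_def using permutes_in_image[OF p2] by blast
      then have h2: "hsh n y = y - (n - 1)" unfolding hsh_def by auto
      have e: "p2' j = y - (n - 1)" unfolding p2'_def y_def using h1 h2 y_def by simp
      have ne: "y - (n - 1) \<noteq> 0" using inr n by auto
      have yy: "n - 1 + (y - (n - 1)) = y" using inr by auto
      have yhk: "yh n u k = u (n - 1 + k)" if "k \<noteq> 0" for k using that by (simp add: yh_def)
      have "(yh n u \<circ> p2') j = yh n u (y - (n - 1))" by (simp add: e)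
      also have "\<dots> = u (n - 1 + (y - (n - 1)))" by (rule yhk[OF ne])
      also have "\<dots> = u y" by (simp only: yy)
      also have "u y = yh n (u \<circ> p2) j" using False by (simp add: yh_def y_def)
      finally show ?thesis by simp
    qed
  qed
  have "qcoeff q n (yh n u \<circ> p2') = of_int (sign p2) * qcoeff q n (yh n u)"
    using qcoeff_perm[OF p2'n] sg by simp
  moreover have "qcoeff q n u = of_int (sign p) * qcoeff q n v"
    unfolding u_def by (rule qcoeff_perm[OF p])
  moreover have "qcoeff q n (yh n u) = qcoeff q n (yh n v)"
    unfolding u_def by (rule yh_perm[OF p])
  ultimately show ?thesis using c1 c2 unfolding u_def[symmetric] by (simp add: mult_ac)
qed

lemma core_sh:
  assumes q: "q \<noteq> 0" and n: "n \<ge> 3"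
  shows "(\<Sum>\<sigma>\<in>Sh n (2*n-1). of_int (sign \<sigma>) *
           (qcoeff q n (w \<circ> \<sigma>) * qcoeff q n (yh n (w \<circ> \<sigma>)))) = 0"
proof -
  let ?Q = "{p. p permutes {..<n}}" and ?Q2 = "{p. p permutes {n..<2*n-1}}"
  define FF where "FF \<sigma> = of_int (sign \<sigma>) * (qcoeff q n (w \<circ> \<sigma>) * qcoeff q n (yh n (w \<circ> \<sigma>)))" for \<sigma>
  have nN: "n \<le> 2*n-1" using n by simp
  have "0 = (\<Sum>\<rho>\<in>{\<rho>. \<rho> permutes {..<2*n-1}}. FF \<rho>)"
    using core_full[OF q n, of w] unfolding FF_def by simp
  also have "\<dots> = (\<Sum>\<sigma>\<in>Sh n (2*n-1). \<Sum>p\<in>?Q. \<Sum>p2\<in>?Q2. FF (\<sigma> \<circ> p \<circ> p2))"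
    by (rule shuffle_sum[OF nN])
  also have "\<dots> = (\<Sum>\<sigma>\<in>Sh n (2*n-1). \<Sum>p\<in>?Q. \<Sum>p2\<in>?Q2. FF \<sigma>)"
  proof (intro sum.cong refl)
    fix \<sigma> p p2 assume A: "\<sigma> \<in> Sh n (2*n-1)" "p \<in> ?Q" "p2 \<in> ?Q2"
    have s: "\<sigma> permutes {..<2*n-1}" using A(1) unfolding Sh_def by simp
    have pp: "p permutes {..<n}" "p2 permutes {n..<2*n-1}" using A by auto
    have "permutation \<sigma>" "permutation p" "permutation p2"
      using s pp permutation_permutes by blast+
    then have sg: "sign (\<sigma> \<circ> p \<circ> p2) = sign \<sigma> * sign p * sign p2"
      by (simp add: sign_compose permutation_compose)
    have ff: "qcoeff q n (w \<circ> (\<sigma> \<circ> p \<circ> p2)) * qcoeff q n (yh n (w \<circ> (\<sigma> \<circ> p \<circ> p2))) =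
      of_int (sign p) * of_int (sign p2) * (qcoeff q n (w \<circ> \<sigma>) * qcoeff q n (yh n (w \<circ> \<sigma>)))"
      using FF_perm[OF _ pp, where v="w \<circ> \<sigma>" and q=q] n by (simp add: o_assoc)
    have s1: "(of_int (sign p) * of_int (sign p) :: complex) = 1" "(of_int (sign p2) * of_int (sign p2) :: complex) = 1"
      by (metis of_int_mult sign_idempotent of_int_1)+
    have "FF (\<sigma> \<circ> p \<circ> p2) = of_int (sign \<sigma>) * ((of_int (sign p) * of_int (sign p)) * (of_int (sign p2) * of_int (sign p2)))
        * (qcoeff q n (w \<circ> \<sigma>) * qcoeff q n (yh n (w \<circ> \<sigma>)))"
      unfolding FF_def ff sg of_int_mult by (simp only: ac_simps)
    then show "FF (\<sigma> \<circ> p \<circ> p2) = FF \<sigma>" unfolding FF_def s1 by simp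
  qed
  also have "\<dots> = (\<Sum>\<sigma>\<in>Sh n (2*n-1). of_nat (card ?Q * card ?Q2) * FF \<sigma>)"
    by (rule sum.cong[OF refl]) (simp add: mult_ac)
  also have "\<dots> = of_nat (card ?Q * card ?Q2) * (\<Sum>\<sigma>\<in>Sh n (2*n-1). FF \<sigma>)"
    by (rule sum_distrib_left[symmetric])
  finally have "of_nat (card ?Q * card ?Q2) * (\<Sum>\<sigma>\<in>Sh n (2*n-1). FF \<sigma>) = 0" by simp
  moreover have "card ?Q \<noteq> 0" "card ?Q2 \<noteq> 0"
  proof -
    have "finite ?Q" "finite ?Q2" by (simp_all add: finite_permutations)
    moreover have "id \<in> ?Q" "id \<in> ?Q2" by simp_all
    moreover have "?Q \<noteq> {}" "?Q2 \<noteq> {}" using calculation(3,4) by blast+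
    ultimately show "card ?Q \<noteq> 0" "card ?Q2 \<noteq> 0" by (simp_all add: card_eq_0_iff)
  qed
  ultimately show ?thesis unfolding FF_def by simp
qed


definition supp :: "(int \<Rightarrow> complex) \<Rightarrow> int set" where
  "supp y = {k. y k \<noteq> 0}"

lemma qb_super:
  assumes fin: "\<And>j. j < n \<Longrightarrow> finite (S j)" and sub: "\<And>j. j < n \<Longrightarrow> {k. x j k \<noteq> 0} \<subseteq> S j"
  shows "qbracket q n x m = (\<Sum>i\<in>{i \<in> PiE {..<n} S. (\<Sum>j<n. i j) = m}. (\<Prod>j<n. x j (i j)) * qcoeff q n i)"
  unfolding qbracket_def
proof (rule sum.mono_neutral_left)
  have "finite (PiE {..<n} S)" using fin by (intro finite_PiE) auto
  then show "finite {i \<in> PiE {..<n} S. (\<Sum>j<n. i j) = m}" by simp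
  have "PiE {..<n} (\<lambda>j. {k. x j k \<noteq> 0}) \<subseteq> PiE {..<n} S" using sub by (intro PiE_mono) auto
  then show "{i \<in> PiE {..<n} (\<lambda>j. {k. x j k \<noteq> 0}). (\<Sum>j<n. i j) = m} \<subseteq> {i \<in> PiE {..<n} S. (\<Sum>j<n. i j) = m}"
    by auto
  show "\<forall>i\<in>{i \<in> PiE {..<n} S. (\<Sum>j<n. i j) = m} - {i \<in> PiE {..<n} (\<lambda>j. {k. x j k \<noteq> 0}). (\<Sum>j<n. i j) = m}.
      (\<Prod>j<n. x j (i j)) * qcoeff q n i = 0"
  proof
    fix i assume i: "i \<in> {i \<in> PiE {..<n} S. (\<Sum>j<n. i j) = m} - {i \<in> PiE {..<n} (\<lambda>j. {k. x j k \<noteq> 0}). (\<Sum>j<n. i j) = m}"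
    then have "i \<notin> PiE {..<n} (\<lambda>j. {k. x j k \<noteq> 0})" "i \<in> PiE {..<n} S" by auto
    then obtain j where "j < n" "x j (i j) = 0" by (auto simp: PiE_iff)
    then have "(\<Prod>j<n. x j (i j)) = 0" by (metis finite_lessThan lessThan_iff prod_zero)
    then show "(\<Prod>j<n. x j (i j)) * qcoeff q n i = 0" by simp
  qed
qed

lemma qb_closed:
  assumes "\<And>j. j < n \<Longrightarrow> x j \<in> Vspace"
  shows "qbracket q n x \<in> Vspace"
proof -
  let ?P = "PiE {..<n} (\<lambda>j. {k. x j k \<noteq> 0})"
  have fin: "finite ?P" using assms by (intro finite_PiE) (auto simp: Vspace_def)
  have "{m. qbracket q n x m \<noteq> 0} \<subseteq> (\<lambda>i. \<Sum>j<n. i j) ` ?P"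
  proof
    fix m assume "m \<in> {m. qbracket q n x m \<noteq> 0}"
    then have nz: "qbracket q n x m \<noteq> 0" by simp
    have "{i \<in> ?P. (\<Sum>j<n. i j) = m} \<noteq> {}"
    proof
      assume "{i \<in> ?P. (\<Sum>j<n. i j) = m} = {}"
      then have "qbracket q n x m = 0" unfolding qbracket_def by (simp only: sum.empty)
      then show False using nz by simp
    qed
    then show "m \<in> (\<lambda>i. \<Sum>j<n. i j) ` ?P" by blast
  qed
  then show ?thesis unfolding Vspace_def using fin by (simp add: finite_subset)
qed

lemma qb_linear:
  assumes xV: "\<forall>k<n. x k \<in> Vspace" and j: "j < n" and yV: "y \<in> Vspace" and zV: "z \<in> Vspace"
  shows "qbracket q n (x(j := (\<lambda>m. a * y m + b * z m))) =
        (\<lambda>m. a * qbracket q n (x(j := y)) m + b * qbracket q n (x(j := z)) m)"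
proof
  fix m
  define S where "S k = (if k = j then {k. y k \<noteq> 0} \<union> {k. z k \<noteq> 0} else {m. x k m \<noteq> 0})" for k
  have fin: "finite (S k)" if "k < n" for k using xV yV zV that unfolding S_def Vspace_def by auto
  let ?A = "{i \<in> PiE {..<n} S. (\<Sum>j<n. i j) = m}"
  have e1: "qbracket q n (x(j := (\<lambda>m. a * y m + b * z m))) m = (\<Sum>i\<in>?A. (\<Prod>k<n. (x(j := (\<lambda>m. a * y m + b * z m))) k (i k)) * qcoeff q n i)"
    by (rule qb_super[OF fin]) (auto simp: S_def)
  have e2: "qbracket q n (x(j := y)) m = (\<Sum>i\<in>?A. (\<Prod>k<n. (x(j := y)) k (i k)) * qcoeff q n i)"
    by (rule qb_super[OF fin]) (auto simp: S_def)
  have e3: "qbracket q n (x(j := z)) m = (\<Sum>i\<in>?A. (\<Prod>k<n. (x(j := z)) k (i k)) * qcoeff q n i)"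
    by (rule qb_super[OF fin]) (auto simp: S_def)
  have split: "(\<Prod>k<n. (x(j := w)) k (i k)) = w (i j) * (\<Prod>k\<in>{..<n} - {j}. x k (i k))" for w i
  proof -
    have "(\<Prod>k<n. (x(j := w)) k (i k)) = (x(j := w)) j (i j) * (\<Prod>k\<in>{..<n} - {j}. (x(j := w)) k (i k))"
      using j by (simp add: prod.remove)
    also have "(\<Prod>k\<in>{..<n} - {j}. (x(j := w)) k (i k)) = (\<Prod>k\<in>{..<n} - {j}. x k (i k))"
      by (rule prod.cong) auto
    finally show ?thesis by simp
  qed
  show "qbracket q n (x(j := (\<lambda>m. a * y m + b * z m))) m = a * qbracket q n (x(j := y)) m + b * qbracket q n (x(j := z)) m"
    unfolding e1 e2 e3 split by (simp add: sum_distrib_left sum.distrib[symmetric] distrib_right mult.assoc)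
qed

lemma qb_skew:
  assumes p: "p permutes {..<n}"
  shows "qbracket q n (x \<circ> p) = (\<lambda>m. of_int (sign p) * qbracket q n x m)"
proof
  fix m
  let ?A' = "{i \<in> PiE {..<n} (\<lambda>j. {k. (x \<circ> p) j k \<noteq> 0}). (\<Sum>j<n. i j) = m}"
  let ?A = "{i \<in> PiE {..<n} (\<lambda>j. {k. x j k \<noteq> 0}). (\<Sum>j<n. i j) = m}"
  define ip where "ip = Hilbert_Choice.inv p"
  have ipp: "ip permutes {..<n}" unfolding ip_def by (rule permutes_inv[OF p])
  have pin: "p (ip k) = k" "ip (p k) = k" for k unfolding ip_def using permutes_inverses[OF p] by auto
  have pl: "p k < n \<longleftrightarrow> k < n" for k using permutes_in_image[OF p] by simp
  have ipl: "ip k < n \<longleftrightarrow> k < n" for k using permutes_in_image[OF ipp] by simp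
  have sgn: "of_int (sign p) * (of_int (sign p) :: complex) = 1"
    by (metis of_int_mult sign_idempotent of_int_1)
  have "(\<Sum>i\<in>?A'. (\<Prod>j<n. (x \<circ> p) j (i j)) * qcoeff q n i) =
        (\<Sum>b\<in>?A. of_int (sign p) * ((\<Prod>j<n. x j (b j)) * qcoeff q n b))"
  proof (rule sum.reindex_bij_witness[where i = "\<lambda>b. b \<circ> p" and j = "\<lambda>a. a \<circ> ip"])
    fix a assume a: "a \<in> ?A'"
    have aip: "a \<circ> ip \<circ> p = a" by (rule ext) (simp add: pin)
    then show "a \<circ> ip \<circ> p = a" .
    have "a \<circ> ip \<in> PiE {..<n} (\<lambda>j. {k. x j k \<noteq> 0})"
    proof (rule PiE_I)
      fix k assume "k \<in> {..<n}"
      then have "ip k \<in> {..<n}" using ipl by simp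
      then have "a (ip k) \<in> {m. x (p (ip k)) m \<noteq> 0}" using a by auto
      then show "(a \<circ> ip) k \<in> {m. x k m \<noteq> 0}" by (simp add: pin)
    next
      fix k assume "k \<notin> {..<n}"
      then have "ip k = k" using permutes_not_in[OF ipp] by simp
      then show "(a \<circ> ip) k = undefined" using a \<open>k \<notin> {..<n}\<close> by (auto simp: PiE_def extensional_def)
    qed
    moreover have "(\<Sum>j<n. (a \<circ> ip) j) = (\<Sum>j<n. a j)"
      using sum.permute[OF ipp, of a] by simp
    ultimately show "a \<circ> ip \<in> ?A" using a by simp
    have "(\<Prod>j<n. x j ((a \<circ> ip) j)) = (\<Prod>j<n. x (p j) (a j))"
      using prod.permute[OF p, of "\<lambda>j. x j ((a \<circ> ip) j)"] by (simp add: pin)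
    moreover have "qcoeff q n (a \<circ> ip) = of_int (sign p) * qcoeff q n a"
    proof -
      have "qcoeff q n (a \<circ> ip \<circ> p) = of_int (sign p) * qcoeff q n (a \<circ> ip)" by (rule qcoeff_perm[OF p])
      then have "qcoeff q n a = of_int (sign p) * qcoeff q n (a \<circ> ip)" by (simp only: aip)
      then have "of_int (sign p) * qcoeff q n a = (of_int (sign p) * of_int (sign p)) * qcoeff q n (a \<circ> ip)" by simp
      then show ?thesis using sgn by simp
    qed
    moreover have "of_int (sign p) * (X * (of_int (sign p) * Y)) = (of_int (sign p) * of_int (sign p)) * (X * Y)" for X Y :: complex
      by (simp only: ac_simps)
    ultimately show "of_int (sign p) * ((\<Prod>j<n. x j ((a \<circ> ip) j)) * qcoeff q n (a \<circ> ip)) = (\<Prod>j<n. (x \<circ> p) j (a j)) * qcoeff q n a"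
      using sgn by simp
  next
    fix b assume b: "b \<in> ?A"
    show "b \<circ> p \<circ> ip = b" by (rule ext) (simp add: pin)
    have "b \<circ> p \<in> PiE {..<n} (\<lambda>j. {k. (x \<circ> p) j k \<noteq> 0})"
    proof (rule PiE_I)
      fix k assume "k \<in> {..<n}"
      then have "p k \<in> {..<n}" using pl by simp
      then show "(b \<circ> p) k \<in> {m. (x \<circ> p) k m \<noteq> 0}" using b by auto
    next
      fix k assume "k \<notin> {..<n}"
      then have "p k = k" using permutes_not_in[OF p] by simp
      then show "(b \<circ> p) k = undefined" using b \<open>k \<notin> {..<n}\<close> by (auto simp: PiE_def extensional_def)
    qed
    moreover have "(\<Sum>j<n. (b \<circ> p) j) = (\<Sum>j<n. b j)"
      using sum.permute[OF p, of b] by simp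
    ultimately show "b \<circ> p \<in> ?A'" using b by simp
  qed
  then show "qbracket q n (x \<circ> p) m = of_int (sign p) * qbracket q n x m"
    unfolding qbracket_def by (simp add: sum_distrib_left)
qed

lemma sum_split_N:
  fixes f :: "nat \<Rightarrow> 'a::comm_monoid_add"
  assumes n: "n \<ge> 1"
  shows "(\<Sum>l<2*n-1. f l) = (\<Sum>l<n. f l) + (\<Sum>j\<in>{1..<n}. f (n - 1 + j))"
proof -
  have "(\<Sum>l<2*n-1. f l) = (\<Sum>l\<in>{0..<n}. f l) + (\<Sum>l\<in>{n..<2*n-1}. f l)"
    using n by (simp add: lessThan_atLeast0 sum.atLeastLessThan_concat)
  moreover have "{n..<2*n-1} = {1+(n-1)..<n+(n-1)}" using n by auto
  moreover have "(\<Sum>l\<in>{1+(n-1)..<n+(n-1)}. f l) = (\<Sum>j\<in>{1..<n}. f (j + (n - 1)))"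
    by (rule sum.shift_bounds_nat_ivl)
  ultimately show ?thesis by (simp add: lessThan_atLeast0 add.commute)
qed

lemma prod_split_N:
  fixes f :: "nat \<Rightarrow> 'a::comm_monoid_mult"
  assumes n: "n \<ge> 1"
  shows "(\<Prod>l<2*n-1. f l) = (\<Prod>l<n. f l) * (\<Prod>j\<in>{1..<n}. f (n - 1 + j))"
proof -
  have "(\<Prod>l<2*n-1. f l) = (\<Prod>l\<in>{0..<n}. f l) * (\<Prod>l\<in>{n..<2*n-1}. f l)"
    using n by (simp add: lessThan_atLeast0 prod.atLeastLessThan_concat)
  moreover have "{n..<2*n-1} = {1+(n-1)..<n+(n-1)}" using n by auto
  moreover have "(\<Prod>l\<in>{1+(n-1)..<n+(n-1)}. f l) = (\<Prod>j\<in>{1..<n}. f (j + (n - 1)))"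
    by (rule prod.shift_bounds_nat_ivl)
  ultimately show ?thesis by (simp add: lessThan_atLeast0 add.commute)
qed

lemma lessThan_split0:
  assumes "n \<ge> (1::nat)" shows "{..<n} = insert 0 {1..<n}"
proof (intro equalityI subsetI)
  fix x assume "x \<in> {..<n}" then show "x \<in> insert 0 {1..<n}" by (cases x) auto
next
  fix x assume "x \<in> insert 0 {1..<n}" then show "x \<in> {..<n}" using assms by auto
qed

lemma sum_split_0:
  fixes g :: "nat \<Rightarrow> 'a::comm_monoid_add"
  shows "n \<ge> 1 \<Longrightarrow> (\<Sum>j<n. g j) = g 0 + (\<Sum>j\<in>{1..<n}. g j)"
  by (simp add: lessThan_split0)

lemma prod_split_0:
  fixes g :: "nat \<Rightarrow> 'a::comm_monoid_mult"
  shows "n \<ge> 1 \<Longrightarrow> (\<Prod>j<n. g j) = g 0 * (\<Prod>j\<in>{1..<n}. g j)"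
  by (simp add: lessThan_split0)

lemma stepB:
  fixes x :: "nat \<Rightarrow> int \<Rightarrow> complex" and F :: "(nat \<Rightarrow> int) \<Rightarrow> complex"
  assumes s: "\<sigma> permutes {..<N}"
  shows "(\<Sum>v\<in>{v \<in> PiE {..<N} (\<lambda>_. T). (\<Sum>l<N. v l) = m}. (\<Prod>l<N. x (\<sigma> l) (v l)) * F v) =
         (\<Sum>w\<in>{v \<in> PiE {..<N} (\<lambda>_. T). (\<Sum>l<N. v l) = m}. (\<Prod>l<N. x l (w l)) * F (w \<circ> \<sigma>))"
proof -
  let ?W = "{v \<in> PiE {..<N} (\<lambda>_. T). (\<Sum>l<N. v l) = m}"
  define isg where "isg = Hilbert_Choice.inv \<sigma>"
  have isp: "isg permutes {..<N}" unfolding isg_def by (rule permutes_inv[OF s])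
  have pin: "\<sigma> (isg k) = k" "isg (\<sigma> k) = k" for k unfolding isg_def using permutes_inverses[OF s] by auto
  have memW: "v \<circ> r \<in> ?W" if v: "v \<in> ?W" and r: "r permutes {..<N}" for v r
  proof -
    have "v \<circ> r \<in> PiE {..<N} (\<lambda>_. T)"
    proof (rule PiE_I)
      fix k assume "k \<in> {..<N}"
      then have "r k \<in> {..<N}" using permutes_in_image[OF r] by simp
      then show "(v \<circ> r) k \<in> T" using v by auto
    next
      fix k assume k: "k \<notin> {..<N}"
      then have "r k = k" using permutes_not_in[OF r] by simp
      then show "(v \<circ> r) k = undefined" using v k by (auto simp: PiE_def extensional_def)
    qed
    moreover have "(\<Sum>l<N. (v \<circ> r) l) = (\<Sum>l<N. v l)" using sum.permute[OF r, of v] by simp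
    ultimately show ?thesis using v by simp
  qed
  show ?thesis
  proof (rule sum.reindex_bij_witness[where i = "\<lambda>w. w \<circ> \<sigma>" and j = "\<lambda>v. v \<circ> isg"])
    fix a assume a: "a \<in> ?W"
    have e: "a \<circ> isg \<circ> \<sigma> = a" by (rule ext) (simp add: pin)
    then show "a \<circ> isg \<circ> \<sigma> = a" .
    show "a \<circ> isg \<in> ?W" by (rule memW[OF a isp])
    have "(\<Prod>l<N. x l ((a \<circ> isg) l)) = (\<Prod>l<N. x (\<sigma> l) (a l))"
      using prod.permute[OF s, of "\<lambda>l. x l ((a \<circ> isg) l)"] by (simp add: pin)
    then show "(\<Prod>l<N. x l ((a \<circ> isg) l)) * F (a \<circ> isg \<circ> \<sigma>) = (\<Prod>l<N. x (\<sigma> l) (a l)) * F a"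
      by (simp only: e)
  next
    fix b assume b: "b \<in> ?W"
    show "b \<circ> \<sigma> \<circ> isg = b" by (rule ext) (simp add: pin)
    show "b \<circ> \<sigma> \<in> ?W" by (rule memW[OF b s])
  qed
qed

lemma yh_nz: "k \<noteq> 0 \<Longrightarrow> yh n v k = v (n - 1 + k)"
  by (simp add: yh_def)

lemma stepA:
  fixes y :: "nat \<Rightarrow> int \<Rightarrow> complex" and T :: "int set"
  assumes n: "n \<ge> 1" and finT: "finite T" and supT: "\<And>l. l < 2*n-1 \<Longrightarrow> {k. y l k \<noteq> 0} \<subseteq> T"
  shows "qbracket q n (\<lambda>j. if j = 0 then qbracket q n y else y (n - 1 + j)) m =
    (\<Sum>v\<in>{v \<in> PiE {..<2*n-1} (\<lambda>_. T). (\<Sum>l<2*n-1. v l) = m}.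
        (\<Prod>l<2*n-1. y l (v l)) * (qcoeff q n v * qcoeff q n (yh n v)))"
proof -
  define N where "N = 2*n-1"
  have nN: "n \<le> N" using n unfolding N_def by simp
  define Sm where "Sm = (\<lambda>t. \<Sum>k<n. t k) ` PiE {..<n} (\<lambda>_. T)"
  have finP: "finite (PiE {..<n} (\<lambda>_. T))" using finT by (intro finite_PiE) auto
  have finSm: "finite Sm" unfolding Sm_def using finP by simp
  define U where "U = T \<union> Sm"
  define I where "I = qbracket q n y"
  define B where "B s = {t \<in> PiE {..<n} (\<lambda>_. T). (\<Sum>k<n. t k) = s}" for s
  have finB: "finite (B s)" for s unfolding B_def using finP by simp
  have I_eq: "I s = (\<Sum>t\<in>B s. (\<Prod>k<n. y k (t k)) * qcoeff q n t)" for s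
    unfolding I_def B_def by (rule qb_super) (use finT supT nN N_def in auto)
  have suppI: "{k. I k \<noteq> 0} \<subseteq> Sm"
  proof
    fix s assume "s \<in> {k. I k \<noteq> 0}"
    then have nz: "I s \<noteq> 0" by simp
    have "B s \<noteq> {}"
    proof
      assume "B s = {}"
      then have "I s = 0" unfolding I_eq by (simp only: sum.empty)
      then show False using nz by simp
    qed
    then obtain t where "t \<in> B s" by blast
    then show "s \<in> Sm" unfolding B_def Sm_def by auto
  qed
  define S where "S j = (if j = 0 then U else T)" for j :: nat
  define z where "z = (\<lambda>j. if j = 0 then I else y (n - 1 + j))"
  define A where "A = {i \<in> PiE {..<n} S. (\<Sum>j<n. i j) = m}"
  have finA: "finite A"
  proof -
    have "finite (PiE {..<n} S)" using finT finSm by (intro finite_PiE) (auto simp: S_def U_def)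
    then show ?thesis unfolding A_def by simp
  qed
  have outer: "qbracket q n z m = (\<Sum>i\<in>A. (\<Prod>j<n. z j (i j)) * qcoeff q n i)"
    unfolding A_def
  proof (rule qb_super)
    fix j assume "j < n"
    show "finite (S j)" using finT finSm by (simp add: S_def U_def)
    show "{k. z j k \<noteq> 0} \<subseteq> S j"
    proof (cases "j = 0")
      case True then show ?thesis using suppI by (auto simp: z_def S_def U_def)
    next
      case False
      then have "n - 1 + j < 2*n-1" using \<open>j < n\<close> by auto
      then show ?thesis using False supT by (auto simp: z_def S_def)
    qed
  qed
  define R where "R i = (\<Prod>j\<in>{1..<n}. y (n - 1 + j) (i j))" for i :: "nat \<Rightarrow> int"
  have prodz: "(\<Prod>j<n. z j (i j)) = I (i 0) * R i" for i
  proof -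
    have "(\<Prod>j<n. z j (i j)) = z 0 (i 0) * (\<Prod>j\<in>{1..<n}. z j (i j))" by (rule prod_split_0[OF n])
    also have "(\<Prod>j\<in>{1..<n}. z j (i j)) = R i" unfolding R_def z_def by (rule prod.cong) auto
    finally show ?thesis by (simp add: z_def)
  qed
  define G where "G a = (case a of (i, t) \<Rightarrow> ((\<Prod>k<n. y k (t k)) * qcoeff q n t) * (R i * qcoeff q n i))"
    for a :: "(nat \<Rightarrow> int) \<times> (nat \<Rightarrow> int)"
  have "qbracket q n z m = (\<Sum>i\<in>A. \<Sum>t\<in>B (i 0). G (i, t))"
    unfolding outer prodz I_eq G_def by (simp add: sum_distrib_right mult.assoc)
  also have "\<dots> = (\<Sum>(i, t)\<in>Sigma A (\<lambda>i. B (i 0)). G (i, t))"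
    by (rule sum.Sigma[OF finA]) (simp add: finB)
  also have "\<dots> = (\<Sum>a\<in>Sigma A (\<lambda>i. B (i 0)). G a)"
    by (rule sum.cong) auto
  also have "\<dots> = (\<Sum>v\<in>{v \<in> PiE {..<N} (\<lambda>_. T). (\<Sum>l<N. v l) = m}.
        (\<Prod>l<N. y l (v l)) * (qcoeff q n v * qcoeff q n (yh n v)))"
  proof (rule sum.reindex_bij_witness[where
        j = "\<lambda>(i, t). (\<lambda>l. if l < n then t l else if l < N then i (l - (n - 1)) else undefined)" and
        i = "\<lambda>v. (restrict (yh n v) {..<n}, restrict v {..<n})"])
    fix a assume a: "a \<in> Sigma A (\<lambda>i. B (i 0))"
    obtain i t where at: "a = (i, t)" by (cases a)
    have iA: "i \<in> PiE {..<n} S" "(\<Sum>j<n. i j) = m" and tB: "t \<in> PiE {..<n} (\<lambda>_. T)" "(\<Sum>k<n. t k) = i 0"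
      using a at unfolding A_def B_def by auto
    define v where "v = (\<lambda>l. if l < n then t l else if l < N then i (l - (n - 1)) else undefined)"
    have vt: "v l = t l" if "l < n" for l using that unfolding v_def by simp
    have vi: "v (n - 1 + j) = i j" if "1 \<le> j" "j < n" for j using that unfolding v_def N_def by auto
    have yhv: "yh n v j = i j" if "j < n" for j
    proof (cases "j = 0")
      case True
      have "(\<Sum>k<n. v k) = (\<Sum>k<n. t k)" by (rule sum.cong) (auto simp: vt)
      then show ?thesis using True tB(2) unfolding yh_def by simp
    next
      case False then show ?thesis using vi[of j] that unfolding yh_def by simp
    qed
    have jv: "(\<lambda>(i, t). (\<lambda>l. if l < n then t l else if l < N then i (l - (n - 1)) else undefined)) a = v"
      unfolding at v_def by simp
    show "(\<lambda>v. (restrict (yh n v) {..<n}, restrict v {..<n}))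
          ((\<lambda>(i, t). (\<lambda>l. if l < n then t l else if l < N then i (l - (n - 1)) else undefined)) a) = a"
      unfolding jv
    proof -
      have "restrict (yh n v) {..<n} = i"
      proof
        fix l show "restrict (yh n v) {..<n} l = i l"
          using yhv iA(1) by (cases "l < n") (auto simp: PiE_def extensional_def)
      qed
      moreover have "restrict v {..<n} = t"
      proof
        fix l show "restrict v {..<n} l = t l"
          using vt tB(1) by (cases "l < n") (auto simp: PiE_def extensional_def)
      qed
      ultimately show "(restrict (yh n v) {..<n}, restrict v {..<n}) = a" using at by simp
    qed
    have vP: "v \<in> PiE {..<N} (\<lambda>_. T)"
    proof (rule PiE_I)
      fix l assume "l \<in> {..<N}"
      show "v l \<in> T"
      proof (cases "l < n")
        case True then show ?thesis using vt tB(1) by auto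
      next
        case False
        then have l1: "l - (n - 1) \<noteq> 0" "l - (n - 1) < n" using \<open>l \<in> {..<N}\<close> unfolding N_def by auto
        then have "l - (n - 1) \<in> {..<n}" by simp
        then have "i (l - (n - 1)) \<in> S (l - (n - 1))" by (rule PiE_mem[OF iA(1)])
        then have "i (l - (n - 1)) \<in> T" using l1 by (simp add: S_def)
        moreover have "v l = i (l - (n - 1))" unfolding v_def using False \<open>l \<in> {..<N}\<close> by simp
        ultimately show ?thesis by simp
      qed
    next
      fix l assume "l \<notin> {..<N}"
      then have "\<not> l < n" "\<not> l < N" using nN by auto
      then show "v l = undefined" unfolding v_def by simp
    qed
    have "(\<Sum>l<N. v l) = (\<Sum>l<n. v l) + (\<Sum>j\<in>{1..<n}. v (n - 1 + j))"
      unfolding N_def by (rule sum_split_N[OF n])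
    also have "\<dots> = i 0 + (\<Sum>j\<in>{1..<n}. i j)"
    proof -
      have "(\<Sum>l<n. v l) = (\<Sum>k<n. t k)" by (rule sum.cong) (auto simp: vt)
      moreover have "(\<Sum>j\<in>{1..<n}. v (n - 1 + j)) = (\<Sum>j\<in>{1..<n}. i j)"
        by (rule sum.cong[OF refl], rule vi) auto
      ultimately show ?thesis using tB(2) by simp
    qed
    also have "\<dots> = m" using iA(2) sum_split_0[OF n, of i] by simp
    finally have "(\<Sum>l<N. v l) = m" .
    with vP show "(\<lambda>(i, t). (\<lambda>l. if l < n then t l else if l < N then i (l - (n - 1)) else undefined)) a
        \<in> {v \<in> PiE {..<N} (\<lambda>_. T). (\<Sum>l<N. v l) = m}" unfolding jv by simp
    have p1: "(\<Prod>l<N. y l (v l)) = (\<Prod>k<n. y k (t k)) * R i"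
    proof -
      have "(\<Prod>l<N. y l (v l)) = (\<Prod>l<n. y l (v l)) * (\<Prod>j\<in>{1..<n}. y (n - 1 + j) (v (n - 1 + j)))"
        unfolding N_def by (rule prod_split_N[OF n])
      also have "(\<Prod>l<n. y l (v l)) = (\<Prod>k<n. y k (t k))" by (rule prod.cong) (auto simp: vt)
      also have "(\<Prod>j\<in>{1..<n}. y (n - 1 + j) (v (n - 1 + j))) = R i" unfolding R_def
        by (rule prod.cong[OF refl], rule arg_cong[where f = "y _"], rule vi) auto
      finally show ?thesis .
    qed
    have c1: "qcoeff q n v = qcoeff q n t" by (rule qcoeff_cong) (simp add: vt)
    have c2: "qcoeff q n (yh n v) = qcoeff q n i" by (rule qcoeff_cong) (simp add: yhv)
    show "(\<Prod>l<N. y l (((\<lambda>(i, t). (\<lambda>l. if l < n then t l else if l < N then i (l - (n - 1)) else undefined)) a) l)) *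
        (qcoeff q n ((\<lambda>(i, t). (\<lambda>l. if l < n then t l else if l < N then i (l - (n - 1)) else undefined)) a) *
         qcoeff q n (yh n ((\<lambda>(i, t). (\<lambda>l. if l < n then t l else if l < N then i (l - (n - 1)) else undefined)) a))) = G a"
      unfolding jv p1 c1 c2 by (simp add: G_def at mult_ac)
  next
    fix v assume v: "v \<in> {v \<in> PiE {..<N} (\<lambda>_. T). (\<Sum>l<N. v l) = m}"
    then have vP: "v \<in> PiE {..<N} (\<lambda>_. T)" and vs: "(\<Sum>l<N. v l) = m" by auto
    define i where "i = restrict (yh n v) {..<n}"
    define t where "t = restrict v {..<n}"
    have "(\<lambda>(i, t). (\<lambda>l. if l < n then t l else if l < N then i (l - (n - 1)) else undefined)) (i, t) = v"
    proof (simp, rule ext)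
      fix l
      consider "l < n" | "n \<le> l \<and> l < N" | "N \<le> l" by linarith
      then show "(if l < n then t l else if l < N then i (l - (n - 1)) else undefined) = v l"
      proof cases
        case 1 then show ?thesis unfolding t_def by simp
      next
        case 2
        then have l1: "l - (n - 1) < n" "l - (n - 1) \<noteq> 0" "n - 1 + (l - (n - 1)) = l" unfolding N_def by auto
        have "(if l < n then t l else if l < N then i (l - (n - 1)) else undefined) = i (l - (n - 1))" using 2 by simp
        also have "i (l - (n - 1)) = yh n v (l - (n - 1))" unfolding i_def by (rule restrict_apply') (use l1(1) in simp)
        also have "yh n v (l - (n - 1)) = v (n - 1 + (l - (n - 1)))" by (rule yh_nz[OF l1(2)])
        also have "\<dots> = v l" by (simp only: l1(3))
        finally show ?thesis .
      next
        case 3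
        then have "\<not> l < n" "\<not> l < N" using nN by auto
        moreover have "v l = undefined" by (rule PiE_arb[OF vP]) (use 3 in simp)
        ultimately show ?thesis by simp
      qed
    qed
    then show "(\<lambda>(i, t). (\<lambda>l. if l < n then t l else if l < N then i (l - (n - 1)) else undefined))
        ((\<lambda>v. (restrict (yh n v) {..<n}, restrict v {..<n})) v) = v" unfolding i_def t_def by simp
    have tP: "t \<in> PiE {..<n} (\<lambda>_. T)"
    proof (rule PiE_I)
      fix k assume k: "k \<in> {..<n}"
      then have "k \<in> {..<N}" using nN by simp
      then have "v k \<in> T" by (rule PiE_mem[OF vP])
      then show "t k \<in> T" unfolding t_def using k by simp
    next
      fix k assume "k \<notin> {..<n}" then show "t k = undefined" unfolding t_def by simp
    qed
    have ts: "(\<Sum>k<n. t k) = (\<Sum>k<n. v k)" unfolding t_def by simp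
    have i0: "i 0 = (\<Sum>k<n. v k)"
    proof -
      have "i 0 = yh n v 0" unfolding i_def by (rule restrict_apply') (use n in simp)
      then show ?thesis by (simp add: yh_def)
    qed
    have iP: "i \<in> PiE {..<n} S"
    proof (rule PiE_I)
      fix j assume j: "j \<in> {..<n}"
      show "i j \<in> S j"
      proof (cases "j = 0")
        case True
        have "(\<Sum>k<n. v k) = (\<lambda>t. \<Sum>k<n. t k) t" using ts by simp
        from image_eqI[where f="\<lambda>t. \<Sum>k<n. t k", OF this tP] have "(\<Sum>k<n. v k) \<in> Sm" unfolding Sm_def .
        then show ?thesis using True i0 by (simp add: S_def U_def)
      next
        case False
        then have "n - 1 + j \<in> {..<N}" using j unfolding N_def by auto
        then have "v (n - 1 + j) \<in> T" by (rule PiE_mem[OF vP])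
        moreover have "i j = yh n v j" unfolding i_def by (rule restrict_apply'[OF j])
        moreover have "yh n v j = v (n - 1 + j)" by (rule yh_nz[OF False])
        ultimately show ?thesis using False by (simp add: S_def)
      qed
    qed (simp add: i_def)
    have "(\<Sum>j<n. i j) = i 0 + (\<Sum>j\<in>{1..<n}. i j)" by (rule sum_split_0[OF n])
    also have "(\<Sum>j\<in>{1..<n}. i j) = (\<Sum>j\<in>{1..<n}. v (n - 1 + j))"
    proof (rule sum.cong[OF refl])
      fix j assume j: "j \<in> {1..<n}"
      then have "i j = yh n v j" unfolding i_def by (intro restrict_apply') simp
      also have "\<dots> = v (n - 1 + j)" by (rule yh_nz) (use j in simp)
      finally show "i j = v (n - 1 + j)" .
    qed
    also have "i 0 + \<dots> = (\<Sum>l<N. v l)" unfolding i0 N_def by (rule sum_split_N[OF n, symmetric])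
    finally have "(\<Sum>j<n. i j) = m" using vs by simp
    then have "i \<in> A" unfolding A_def using iP by simp
    moreover have "t \<in> B (i 0)" unfolding B_def using tP ts i0 by simp
    ultimately show "(\<lambda>v. (restrict (yh n v) {..<n}, restrict v {..<n})) v \<in> Sigma A (\<lambda>i. B (i 0))"
      unfolding i_def t_def by simp
  qed
  finally show ?thesis unfolding z_def I_def N_def .
qed

theorem proposition4:
  fixes q :: complex and n :: nat
  assumes "q \<noteq> 0" and "q \<noteq> 1" and "q \<noteq> -1" and "n \<ge> 3"
  shows "sh_n_Lie Vspace n (qbracket q n)"
proof -
  have q: "q \<noteq> 0" and n: "n \<ge> 3" using assms by auto
  have n1: "n \<ge> 1" using n by simp
  have P1: "\<forall>x. (\<forall>j<n. x j \<in> Vspace) \<longrightarrow> qbracket q n x \<in> Vspace"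
    using qb_closed by blast
  have P2: "\<forall>x j y z a b. (\<forall>k<n. x k \<in> Vspace) \<and> j < n \<and> y \<in> Vspace \<and> z \<in> Vspace \<longrightarrow>
        qbracket q n (x(j := (\<lambda>m. a * y m + b * z m))) =
        (\<lambda>m. a * qbracket q n (x(j := y)) m + b * qbracket q n (x(j := z)) m)"
  proof (intro allI impI)
    fix x j y z a b
    assume H: "(\<forall>k<n. x k \<in> Vspace) \<and> j < n \<and> y \<in> Vspace \<and> z \<in> Vspace"
    show "qbracket q n (x(j := (\<lambda>m. a * y m + b * z m))) =
        (\<lambda>m. a * qbracket q n (x(j := y)) m + b * qbracket q n (x(j := z)) m)"
      using H by (intro qb_linear) auto
  qed
  have P3: "\<forall>x p. (\<forall>k<n. x k \<in> Vspace) \<and> p permutes {..<n} \<longrightarrow>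
        qbracket q n (x \<circ> p) = (\<lambda>m. of_int (sign p) * qbracket q n x m)"
    using qb_skew by blast
  have P4: "\<forall>x. (\<forall>k<2*n-1. x k \<in> Vspace) \<longrightarrow>
        (\<lambda>m. \<Sum>\<sigma>\<in>{\<sigma>. \<sigma> permutes {..<2*n-1} \<and> strict_mono_on {..<n} \<sigma> \<and> strict_mono_on {n..<2*n-1} \<sigma>}.
           of_int (sign \<sigma>) * qbracket q n (\<lambda>j. if j = 0 then qbracket q n (\<lambda>k. x (\<sigma> k)) else x (\<sigma> (n - 1 + j))) m)
        = (\<lambda>m. 0)"
  proof (intro allI impI)
    fix x :: "nat \<Rightarrow> int \<Rightarrow> complex"
    assume xV: "\<forall>k<2*n-1. x k \<in> Vspace"
    define T where "T = (\<Union>l\<in>{..<2*n-1}. {k. x l k \<noteq> 0})"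
    have finT: "finite T" unfolding T_def using xV by (auto simp: Vspace_def)
    have eqSh: "{\<sigma>. \<sigma> permutes {..<2*n-1} \<and> strict_mono_on {..<n} \<sigma> \<and> strict_mono_on {n..<2*n-1} \<sigma>} = Sh n (2*n-1)"
      by (simp add: Sh_def)
    show "(\<lambda>m. \<Sum>\<sigma>\<in>{\<sigma>. \<sigma> permutes {..<2*n-1} \<and> strict_mono_on {..<n} \<sigma> \<and> strict_mono_on {n..<2*n-1} \<sigma>}.
           of_int (sign \<sigma>) * qbracket q n (\<lambda>j. if j = 0 then qbracket q n (\<lambda>k. x (\<sigma> k)) else x (\<sigma> (n - 1 + j))) m)
        = (\<lambda>m. 0)"
    proof (rule ext)
      fix m
      let ?W = "{v \<in> PiE {..<2*n-1} (\<lambda>_. T). (\<Sum>l<2*n-1. v l) = m}"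
      let ?P = "\<lambda>w. \<Prod>l<2*n-1. x l (w l)"
      let ?F = "\<lambda>v. qcoeff q n v * qcoeff q n (yh n v)"
      have termeq: "qbracket q n (\<lambda>j. if j = 0 then qbracket q n (\<lambda>k. x (\<sigma> k)) else x (\<sigma> (n - 1 + j))) m
          = (\<Sum>w\<in>?W. ?P w * ?F (w \<circ> \<sigma>))" if sS: "\<sigma> \<in> Sh n (2*n-1)" for \<sigma>
      proof -
        have s: "\<sigma> permutes {..<2*n-1}" using sS unfolding Sh_def by simp
        have supT: "{k. x (\<sigma> l) k \<noteq> 0} \<subseteq> T" if "l < 2*n-1" for l
        proof -
          have "\<sigma> l \<in> {..<2*n-1}" using that permutes_in_image[OF s] by simp
          then show ?thesis unfolding T_def by blast
        qed
        have "qbracket q n (\<lambda>j. if j = 0 then qbracket q n (\<lambda>k. x (\<sigma> k)) else x (\<sigma> (n - 1 + j))) m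
            = (\<Sum>v\<in>?W. (\<Prod>l<2*n-1. x (\<sigma> l) (v l)) * ?F v)"
          by (rule stepA[where y = "\<lambda>k. x (\<sigma> k)", OF n1 finT supT])
        also have "\<dots> = (\<Sum>w\<in>?W. ?P w * ?F (w \<circ> \<sigma>))"
          by (rule stepB[OF s])
        finally show ?thesis .
      qed
      have "(\<Sum>\<sigma>\<in>Sh n (2*n-1). of_int (sign \<sigma>) *
              qbracket q n (\<lambda>j. if j = 0 then qbracket q n (\<lambda>k. x (\<sigma> k)) else x (\<sigma> (n - 1 + j))) m)
          = (\<Sum>\<sigma>\<in>Sh n (2*n-1). \<Sum>w\<in>?W. ?P w * (of_int (sign \<sigma>) * ?F (w \<circ> \<sigma>)))"
        by (rule sum.cong[OF refl]) (simp add: termeq sum_distrib_left mult_ac)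
      also have "\<dots> = (\<Sum>w\<in>?W. ?P w * (\<Sum>\<sigma>\<in>Sh n (2*n-1). of_int (sign \<sigma>) * ?F (w \<circ> \<sigma>)))"
        by (subst sum.swap) (simp add: sum_distrib_left)
      also have "\<dots> = 0"
        using core_sh[OF q n] by simp
      finally show "(\<Sum>\<sigma>\<in>{\<sigma>. \<sigma> permutes {..<2*n-1} \<and> strict_mono_on {..<n} \<sigma> \<and> strict_mono_on {n..<2*n-1} \<sigma>}.
           of_int (sign \<sigma>) * qbracket q n (\<lambda>j. if j = 0 then qbracket q n (\<lambda>k. x (\<sigma> k)) else x (\<sigma> (n - 1 + j))) m) = 0"
        unfolding eqSh .
    qed
  qed
  show ?thesis unfolding sh_n_Lie_def using P1 P2 P3 P4 by (intro conjI) 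
qed

end
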